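(* Let $H_n$ be the pyrene system with $n$ pyrene fragments, and let $F(H_0,x)=1$. Then $F(H_1,x)=4x^2+2x$ and for all $n\ge 2$, $$F(H_n,x)=(4x^2+2x)F(H_{n-1},x)-x^2F(H_{n-2},x).$$
   Context: Pyrene system: draw the hexagonal lattice so that every hexagon has two vertical sides; horizontally adjacent hexagons then share a vertical edge. For $n\ge1$, $H_n$ is the hexagonal system (the plane graph formed by the vertices and edges of the following $4n$ hexagons) consisting of a horizontal linear row of $2n$ hexagons $h_{1,1},h_{1,2},\dots,h_{n,1},h_{n,2}$, consecutive ones sharing a vertical edge, together with, for each $i$, a hexagon $s_{i,1}$ directly above and a hexagon $s_{i,2}$ directly below the common edge of $h_{i,1}$ and $h_{i,2}$ (each sharing an edge with both $h_{i,1}$ and $h_{i,2}$). $H_0$ is the null graph. For a perfect matching $M$ of $G$, a forcing set is a subset $S\subseteq M$ contained in no other perfect matching of $G$, and the forcing number $f(G,M)$ is the minimum size of a forcing set. The forcing polynomial is $F(G,x)=\sum_{M\in\mathcal{M}(G)}x^{f(G,M)}$, where $\mathcal{M}(G)$ is the set of perfect matchings of $G$. *)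

theory Defs
  imports "HOL-Computational_Algebra.Polynomial"
begin

text \<open>A (finite simple) graph is given by a vertex set V and an edge set E of
  2-element vertex sets.\<close>

definition perfect_matching :: "'a set \<Rightarrow> 'a set set \<Rightarrow> 'a set set \<Rightarrow> bool" where
  "perfect_matching V E M \<longleftrightarrow> M \<subseteq> E \<and> (\<forall>v\<in>V. \<exists>!e. e \<in> M \<and> v \<in> e)"

definition forcing_set :: "'a set \<Rightarrow> 'a set set \<Rightarrow> 'a set set \<Rightarrow> 'a set set \<Rightarrow> bool" where
  "forcing_set V E M S \<longleftrightarrow> S \<subseteq> M \<and>
     (\<forall>M'. perfect_matching V E M' \<and> S \<subseteq> M' \<longrightarrow> M' = M)"

definition forcing_number :: "'a set \<Rightarrow> 'a set set \<Rightarrow> 'a set set \<Rightarrow> nat" where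
  "forcing_number V E M = (LEAST k. \<exists>S. forcing_set V E M S \<and> card S = k)"

definition forcing_poly :: "'a set \<Rightarrow> 'a set set \<Rightarrow> int poly" where
  "forcing_poly V E = (\<Sum>M\<in>{M. perfect_matching V E M}. monom 1 (forcing_number V E M))"

text \<open>Horizontally adjacent hexagons have centres differing by (2,0)
  and share a vertical edge; the hexagon with centre (x+1,y+3) shares an edge with both
  hexagons centred at (x,y) and (x+2,y), and lies directly above their common edge.\<close>

definition hex_vertices :: "int \<times> int \<Rightarrow> (int \<times> int) set" where
  "hex_vertices c = (case c of (x,y) \<Rightarrow>
     {(x,y+2), (x+1,y+1), (x+1,y-1), (x,y-2), (x-1,y-1), (x-1,y+1)})"

definition hex_edges :: "int \<times> int \<Rightarrow> (int \<times> int) set set" where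
  "hex_edges c = (case c of (x,y) \<Rightarrow>
     {{(x,y+2), (x+1,y+1)}, {(x+1,y+1), (x+1,y-1)}, {(x+1,y-1), (x,y-2)},
      {(x,y-2), (x-1,y-1)}, {(x-1,y-1), (x-1,y+1)}, {(x-1,y+1), (x,y+2)}})"

text \<open>Centres of the 4n hexagons of H_n: h_{i,1}, h_{i,2} have centres (4i-4,0), (4i-2,0)
  (i = 1..n), i.e. a linear row (2k,0), k < 2n; s_{i,1} has centre (4i-3,3) and s_{i,2}
  has centre (4i-3,-3).\<close>

definition pyrene_centres :: "nat \<Rightarrow> (int \<times> int) set" where
  "pyrene_centres n =
     {(2 * int k, 0) | k. k < 2 * n}
     \<union> {(4 * int i - 3, 3) | i. 1 \<le> i \<and> i \<le> n}
     \<union> {(4 * int i - 3, -3) | i. 1 \<le> i \<and> i \<le> n}"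

definition pyrene_V :: "nat \<Rightarrow> (int \<times> int) set" where
  "pyrene_V n = (\<Union>c\<in>pyrene_centres n. hex_vertices c)"

definition pyrene_E :: "nat \<Rightarrow> (int \<times> int) set set" where
  "pyrene_E n = (\<Union>c\<in>pyrene_centres n. hex_edges c)"

definition F_pyrene :: "nat \<Rightarrow> int poly" where
  "F_pyrene n = forcing_poly (pyrene_V n) (pyrene_E n)"

end

theory Submission
  imports Defs
begin
datatype hv = V1 | V2 | V3 | V4 | V5 | V6
datatype cv = In nat bool hv | Bd nat bool

fun dx :: "hv \<Rightarrow> int" where
  "dx V1 = 0" | "dx V2 = 0" | "dx V3 = 1" | "dx V4 = 2" | "dx V5 = 2" | "dx V6 = 1"
fun dy :: "hv \<Rightarrow> int" where
  "dy V1 = 2" | "dy V2 = 4" | "dy V3 = 5" | "dy V4 = 4" | "dy V5 = 2" | "dy V6 = 1"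

definition sg :: "bool \<Rightarrow> int" where "sg b = (if b then 1 else -1)"

fun pos :: "cv \<Rightarrow> int \<times> int" where
  "pos (In i s h) = (4 * int i + dx h, sg s * dy h)"
| "pos (Bd j s) = (4 * int j - 1, sg s)"

lemma pos_In_In: "pos (In i s h) = pos (In i' s' h') \<Longrightarrow> i = i' \<and> s = s' \<and> h = h'"
  by (cases h; cases h'; cases s; cases s'; simp add: sg_def; presburger)

lemma pos_In_Bd: "pos (In i s h) \<noteq> pos (Bd j s')"
  by (cases h; cases s; cases s'; simp add: sg_def; presburger)

lemma inj_pos: "inj pos"
proof (rule injI)
  fix x y assume "pos x = pos y"
  then show "x = y"
  proof (cases x; cases y)
    fix i s h i' s' h' assume "x = In i s h" "y = In i' s' h'"
    then show ?thesis using \<open>pos x = pos y\<close> pos_In_In by blast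
  next
    fix i s h j s' assume "x = In i s h" "y = Bd j s'"
    then show ?thesis using \<open>pos x = pos y\<close> pos_In_Bd by metis
  next
    fix i s h j s' assume "y = In i s h" "x = Bd j s'"
    then show ?thesis using \<open>pos x = pos y\<close> pos_In_Bd by metis
  next
    fix i s j s' assume "x = Bd i s" "y = Bd j s'"
    then show ?thesis using \<open>pos x = pos y\<close> by (auto simp: sg_def split: if_splits)
  qed
qed

definition imE :: "('a \<Rightarrow> 'b) \<Rightarrow> 'a set set \<Rightarrow> 'b set set" where
  "imE f E = (\<lambda>e. f ` e) ` E"

lemma inj_imE: "inj f \<Longrightarrow> inj (imE f)"
proof -
  assume f: "inj f"
  have "inj (image f)" using f by (simp add: inj_on_def inj_image_eq_iff)
  then have "inj (image (image f))" by (simp add: inj_on_def inj_image_eq_iff)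
  then show ?thesis unfolding imE_def by (simp add: inj_on_def)
qed

lemma imE_alt: "imE f = image (image f)"
  by (simp add: imE_def fun_eq_iff)

lemma inj_image_img: "inj f \<Longrightarrow> inj (image f)"
  by (simp add: inj_on_def inj_image_eq_iff)

lemma imE_subset: "inj f \<Longrightarrow> imE f A \<subseteq> imE f B \<longleftrightarrow> A \<subseteq> B"
  unfolding imE_alt by (rule inj_image_subset_iff[OF inj_image_img])

lemma imE_eq: "inj f \<Longrightarrow> imE f A = imE f B \<longleftrightarrow> A = B"
  unfolding imE_alt by (rule inj_image_eq_iff[OF inj_image_img])

lemma pm_transfer:
  assumes f: "inj f"
  shows "perfect_matching (f ` V) (imE f E) (imE f M) \<longleftrightarrow> perfect_matching V E M"
proof -
  have sub: "imE f M \<subseteq> imE f E \<longleftrightarrow> M \<subseteq> E"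
    by (rule imE_subset[OF f])
  have ex: "(\<exists>!e'. e' \<in> imE f M \<and> f v \<in> e') \<longleftrightarrow> (\<exists>!e. e \<in> M \<and> v \<in> e)" for v
  proof
    assume "\<exists>!e'. e' \<in> imE f M \<and> f v \<in> e'"
    then obtain e' where e': "e' \<in> imE f M" "f v \<in> e'" and u: "\<And>d. d \<in> imE f M \<and> f v \<in> d \<Longrightarrow> d = e'" by blast
    from e' obtain e where e: "e \<in> M" "e' = f ` e" unfolding imE_def by blast
    have "v \<in> e" using e e' f by (simp add: inj_image_mem_iff)
    moreover have "d = e" if "d \<in> M" "v \<in> d" for d
    proof -
      have "f ` d \<in> imE f M" using that unfolding imE_def by blast
      then have "f ` d = e'" using u that by blast
      then show ?thesis using e f inj_image_eq_iff by metis
    qed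
    ultimately show "\<exists>!e. e \<in> M \<and> v \<in> e" using e by blast
  next
    assume "\<exists>!e. e \<in> M \<and> v \<in> e"
    then obtain e where e: "e \<in> M" "v \<in> e" and u: "\<And>d. d \<in> M \<and> v \<in> d \<Longrightarrow> d = e" by blast
    have "f ` e \<in> imE f M" "f v \<in> f ` e" using e unfolding imE_def by auto
    moreover have "d = f ` e" if "d \<in> imE f M" "f v \<in> d" for d
    proof -
      from that obtain d0 where "d0 \<in> M" "d = f ` d0" unfolding imE_def by blast
      moreover have "v \<in> d0" using that \<open>d = f ` d0\<close> f by (simp add: inj_image_mem_iff)
      ultimately show ?thesis using u by blast
    qed
    ultimately show "\<exists>!e'. e' \<in> imE f M \<and> f v \<in> e'" by blast
  qed
  have b: "(\<forall>v'\<in>f ` V. \<exists>!e'. e' \<in> imE f M \<and> v' \<in> e') = (\<forall>v\<in>V. \<exists>!e'. e' \<in> imE f M \<and> f v \<in> e')"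
    by (simp only: ball_simps)
  show ?thesis unfolding perfect_matching_def b ex sub by (rule refl)
qed

lemma sub_img: "M' \<subseteq> g ` E \<Longrightarrow> M' = g ` {e \<in> E. g e \<in> M'}"
  by (auto simp: image_iff subset_iff)

lemma pm_surj:
  assumes f: "inj f" and pm: "perfect_matching (f ` V) (imE f E) M'"
  shows "\<exists>M. M' = imE f M \<and> perfect_matching V E M"
proof -
  define M where "M = {e \<in> E. f ` e \<in> M'}"
  have "M' \<subseteq> imE f E" using pm unfolding perfect_matching_def by blast
  then have "M' = imE f M" unfolding M_def imE_def by (rule sub_img)
  moreover have "perfect_matching V E M"
    using pm unfolding \<open>M' = imE f M\<close> pm_transfer[OF f] .
  ultimately show ?thesis by blast
qed

lemma sub_imE_surj:
  assumes "S' \<subseteq> imE f M" shows "\<exists>S. S \<subseteq> M \<and> S' = imE f S"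
proof -
  define S where "S = {e \<in> M. f ` e \<in> S'}"
  have "S' = imE f S" using assms unfolding S_def imE_def by (rule sub_img)
  moreover have "S \<subseteq> M" unfolding S_def by blast
  ultimately show ?thesis by blast
qed

lemma fs_transfer:
  assumes f: "inj f"
  shows "forcing_set (f ` V) (imE f E) (imE f M) (imE f S) \<longleftrightarrow> forcing_set V E M S"
proof -
  have "(\<forall>M'. perfect_matching (f ` V) (imE f E) M' \<and> imE f S \<subseteq> M' \<longrightarrow> M' = imE f M)
     \<longleftrightarrow> (\<forall>M'. perfect_matching V E M' \<and> S \<subseteq> M' \<longrightarrow> M' = M)"
  proof
    assume H: "\<forall>M'. perfect_matching (f ` V) (imE f E) M' \<and> imE f S \<subseteq> M' \<longrightarrow> M' = imE f M"
    show "\<forall>M'. perfect_matching V E M' \<and> S \<subseteq> M' \<longrightarrow> M' = M"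
    proof (intro allI impI)
      fix M' assume a: "perfect_matching V E M' \<and> S \<subseteq> M'"
      then have "perfect_matching (f ` V) (imE f E) (imE f M')" "imE f S \<subseteq> imE f M'"
        using pm_transfer[OF f] imE_subset[OF f] by auto
      then have "imE f M' = imE f M" using H by blast
      then show "M' = M" using imE_eq[OF f] by blast
    qed
  next
    assume H: "\<forall>M'. perfect_matching V E M' \<and> S \<subseteq> M' \<longrightarrow> M' = M"
    show "\<forall>M'. perfect_matching (f ` V) (imE f E) M' \<and> imE f S \<subseteq> M' \<longrightarrow> M' = imE f M"
    proof (intro allI impI)
      fix M' assume a: "perfect_matching (f ` V) (imE f E) M' \<and> imE f S \<subseteq> M'"
      then obtain M0 where "M' = imE f M0" "perfect_matching V E M0" using pm_surj[OF f] by blast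
      then have "S \<subseteq> M0" using a imE_subset[OF f] by blast
      then show "M' = imE f M" using H \<open>M' = imE f M0\<close> \<open>perfect_matching V E M0\<close> by blast
    qed
  qed
  moreover have "imE f S \<subseteq> imE f M \<longleftrightarrow> S \<subseteq> M" by (rule imE_subset[OF f])
  ultimately show ?thesis unfolding forcing_set_def by (simp only:)
qed

lemma card_imE: "inj f \<Longrightarrow> card (imE f S) = card S"
  unfolding imE_alt by (rule card_image) (metis inj_image_img inj_on_subset subset_UNIV)

lemma fn_transfer:
  assumes f: "inj f"
  shows "forcing_number (f ` V) (imE f E) (imE f M) = forcing_number V E M"
proof -
  have "(\<exists>S'. forcing_set (f ` V) (imE f E) (imE f M) S' \<and> card S' = k) \<longleftrightarrow>
        (\<exists>S. forcing_set V E M S \<and> card S = k)" for k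
  proof
    assume "\<exists>S'. forcing_set (f ` V) (imE f E) (imE f M) S' \<and> card S' = k"
    then obtain S' where S': "forcing_set (f ` V) (imE f E) (imE f M) S'" "card S' = k" by blast
    then have "S' \<subseteq> imE f M" unfolding forcing_set_def by blast
    then obtain S where "S' = imE f S" using sub_imE_surj by blast
    then show "\<exists>S. forcing_set V E M S \<and> card S = k"
      using S' fs_transfer[OF f] card_imE[OF f] by metis
  next
    assume "\<exists>S. forcing_set V E M S \<and> card S = k"
    then show "\<exists>S'. forcing_set (f ` V) (imE f E) (imE f M) S' \<and> card S' = k"
      using fs_transfer[OF f] card_imE[OF f] by metis
  qed
  then show ?thesis unfolding forcing_number_def by (simp only:)
qed

lemma fp_transfer:
  assumes f: "inj f"
  shows "forcing_poly (f ` V) (imE f E) = forcing_poly V E"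
proof -
  have "{M'. perfect_matching (f ` V) (imE f E) M'} = imE f ` {M. perfect_matching V E M}"
  proof (intro equalityI subsetI)
    fix M' assume "M' \<in> {M'. perfect_matching (f ` V) (imE f E) M'}"
    then obtain M where "M' = imE f M" "perfect_matching V E M" using pm_surj[OF f] by blast
    then show "M' \<in> imE f ` {M. perfect_matching V E M}" by blast
  next
    fix M' assume "M' \<in> imE f ` {M. perfect_matching V E M}"
    then obtain M where "M' = imE f M" "perfect_matching V E M" by blast
    then show "M' \<in> {M'. perfect_matching (f ` V) (imE f E) M'}" using pm_transfer[OF f] by simp
  qed
  moreover have "inj_on (imE f) {M. perfect_matching V E M}"
    by (rule inj_on_subset[OF inj_imE[OF f] subset_UNIV])
  ultimately have "forcing_poly (f ` V) (imE f E) = (\<Sum>M\<in>{M. perfect_matching V E M}. monom 1 (forcing_number (f ` V) (imE f E) (imE f M)))"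
    unfolding forcing_poly_def by (simp only: sum.reindex comp_def)
  then show ?thesis unfolding forcing_poly_def fn_transfer[OF f] .
qed

definition ahex :: "'a \<Rightarrow> 'a \<Rightarrow> 'a \<Rightarrow> 'a \<Rightarrow> 'a \<Rightarrow> 'a \<Rightarrow> 'a set set" where
  "ahex a b c d e f = {{a,b},{b,c},{c,d},{d,e},{e,f},{f,a}}"

definition avs :: "'a \<Rightarrow> 'a \<Rightarrow> 'a \<Rightarrow> 'a \<Rightarrow> 'a \<Rightarrow> 'a \<Rightarrow> 'a set" where
  "avs a b c d e f = {a,b,c,d,e,f}"

lemma imE_ahex: "imE g (ahex a b c d e f) = ahex (g a) (g b) (g c) (g d) (g e) (g f)"
  by (simp add: imE_def ahex_def)

lemma img_avs: "g ` (avs a b c d e f) = avs (g a) (g b) (g c) (g d) (g e) (g f)"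
  by (simp add: avs_def)

lemma hex_edges_ahex: "hex_edges (x,y) = ahex (x,y+2) (x+1,y+1) (x+1,y-1) (x,y-2) (x-1,y-1) (x-1,y+1)"
  by (simp add: hex_edges_def ahex_def)

lemma hex_vertices_avs: "hex_vertices (x,y) = avs (x,y+2) (x+1,y+1) (x+1,y-1) (x,y-2) (x-1,y-1) (x-1,y+1)"
  by (simp add: hex_vertices_def avs_def)

definition UE :: "nat \<Rightarrow> cv set set" where
  "UE i = ahex (In i True V1) (In i True V6) (In i False V6) (In i False V1) (Bd i False) (Bd i True)
     \<union> ahex (In i True V5) (Bd (Suc i) True) (Bd (Suc i) False) (In i False V5) (In i False V6) (In i True V6)
     \<union> ahex (In i True V3) (In i True V4) (In i True V5) (In i True V6) (In i True V1) (In i True V2)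
     \<union> ahex (In i False V6) (In i False V5) (In i False V4) (In i False V3) (In i False V2) (In i False V1)"

definition UV :: "nat \<Rightarrow> cv set" where
  "UV i = avs (In i True V1) (In i True V6) (In i False V6) (In i False V1) (Bd i False) (Bd i True)
     \<union> avs (In i True V5) (Bd (Suc i) True) (Bd (Suc i) False) (In i False V5) (In i False V6) (In i True V6)
     \<union> avs (In i True V3) (In i True V4) (In i True V5) (In i True V6) (In i True V1) (In i True V2)
     \<union> avs (In i False V6) (In i False V5) (In i False V4) (In i False V3) (In i False V2) (In i False V1)"

definition CE :: "nat \<Rightarrow> cv set set" where "CE n = (\<Union>i<n. UE i)"
definition CV :: "nat \<Rightarrow> cv set" where "CV n = {In i s h | i s h. i < n} \<union> {Bd j s | j s. j \<le> n}"

definition unitc :: "nat \<Rightarrow> (int \<times> int) set" where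
  "unitc i = {(4 * int i, 0), (4 * int i + 2, 0), (4 * int i + 1, 3), (4 * int i + 1, -3)}"

lemma centres_eq: "pyrene_centres n = (\<Union>i<n. unitc i)"
proof (intro equalityI subsetI)
  fix c assume "c \<in> pyrene_centres n"
  then consider k where "c = (2 * int k, 0)" "k < 2 * n"
    | i where "c = (4 * int i - 3, 3)" "1 \<le> i" "i \<le> n"
    | i where "c = (4 * int i - 3, -3)" "1 \<le> i" "i \<le> n"
    unfolding pyrene_centres_def by blast
  then show "c \<in> (\<Union>i<n. unitc i)"
  proof cases
    case (1 k)
    show ?thesis
    proof (cases "even k")
      case True
      then obtain i where "k = 2 * i" by blast
      then show ?thesis using 1 by (auto simp: unitc_def intro!: bexI[of _ i])
    next
      case False
      then obtain i where "k = 2 * i + 1" using oddE by blast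
      then show ?thesis using 1 by (auto simp: unitc_def intro!: bexI[of _ i])
    qed
  next
    case (2 i)
    then show ?thesis by (auto simp: unitc_def intro!: bexI[of _ "i - 1"])
  next
    case (3 i)
    then show ?thesis by (auto simp: unitc_def intro!: bexI[of _ "i - 1"])
  qed
next
  fix c assume "c \<in> (\<Union>i<n. unitc i)"
  then obtain i where i: "i < n" "c \<in> unitc i" by blast
  have a: "(4 * int i, 0::int) = (2 * int (2 * i), 0)" "(4 * int i + 2, 0::int) = (2 * int (2 * i + 1), 0)"
    "(4 * int i + 1, 3::int) = (4 * int (Suc i) - 3, 3)" "(4 * int i + 1, -3::int) = (4 * int (Suc i) - 3, -3)"
    by auto
  have "(2 * int (2*i), 0::int) \<in> {(2 * int k, 0) |k. k < 2 * n}"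
       "(2 * int (2*i+1), 0::int) \<in> {(2 * int k, 0) |k. k < 2 * n}"
       "(4 * int (Suc i) - 3, 3::int) \<in> {(4 * int i - 3, 3) |i. 1 \<le> i \<and> i \<le> n}"
       "(4 * int (Suc i) - 3, -3::int) \<in> {(4 * int i - 3, -3) |i. 1 \<le> i \<and> i \<le> n}"
    using i(1)
    by ((intro CollectI exI[of _ "2*i"]; simp), (intro CollectI exI[of _ "2*i+1"]; simp),
        (intro CollectI exI[of _ "Suc i"]; simp), (intro CollectI exI[of _ "Suc i"]; simp))
  then show "c \<in> pyrene_centres n"
    using i(2) unfolding unitc_def pyrene_centres_def a
    apply (simp only: insert_iff empty_iff)
    apply (elim disjE)
        apply (hypsubst, rule UnI1, rule UnI1, assumption)
       apply (hypsubst, rule UnI1, rule UnI1, assumption)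
      apply (hypsubst, rule UnI1, rule UnI2, assumption)
     apply (hypsubst, rule UnI2, assumption)
    apply (erule FalseE)
    done
qed

lemma imE_Un: "imE g (A \<union> B) = imE g A \<union> imE g B"
  by (simp add: imE_def image_Un)

lemma imE_UN: "imE g (\<Union>i\<in>I. A i) = (\<Union>i\<in>I. imE g (A i))"
  by (simp add: imE_def image_UN)

lemma h1: "hex_edges (4 * int i, 0) = imE pos (ahex (In i True V1) (In i True V6) (In i False V6) (In i False V1) (Bd i False) (Bd i True))"
  by (simp add: hex_edges_ahex imE_ahex sg_def algebra_simps)
lemma h2: "hex_edges (4 * int i + 2, 0) = imE pos (ahex (In i True V5) (Bd (Suc i) True) (Bd (Suc i) False) (In i False V5) (In i False V6) (In i True V6))"
  by (simp add: hex_edges_ahex imE_ahex sg_def algebra_simps)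
lemma h3: "hex_edges (4 * int i + 1, 3) = imE pos (ahex (In i True V3) (In i True V4) (In i True V5) (In i True V6) (In i True V1) (In i True V2))"
  by (simp add: hex_edges_ahex imE_ahex sg_def algebra_simps)
lemma h4: "hex_edges (4 * int i + 1, -3) = imE pos (ahex (In i False V6) (In i False V5) (In i False V4) (In i False V3) (In i False V2) (In i False V1))"
  by (simp add: hex_edges_ahex imE_ahex sg_def algebra_simps)

lemma unit_edges: "(\<Union>c\<in>unitc i. hex_edges c) = imE pos (UE i)"
  unfolding unitc_def UE_def imE_Un by (simp only: h1 h2 h3 h4 UN_insert UN_empty Un_empty_right Un_assoc)

lemma v1: "hex_vertices (4 * int i, 0) = pos ` (avs (In i True V1) (In i True V6) (In i False V6) (In i False V1) (Bd i False) (Bd i True))"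
  by (simp add: hex_vertices_avs img_avs sg_def algebra_simps)
lemma v2: "hex_vertices (4 * int i + 2, 0) = pos ` (avs (In i True V5) (Bd (Suc i) True) (Bd (Suc i) False) (In i False V5) (In i False V6) (In i True V6))"
  by (simp add: hex_vertices_avs img_avs sg_def algebra_simps)
lemma v3: "hex_vertices (4 * int i + 1, 3) = pos ` (avs (In i True V3) (In i True V4) (In i True V5) (In i True V6) (In i True V1) (In i True V2))"
  by (simp add: hex_vertices_avs img_avs sg_def algebra_simps)
lemma v4: "hex_vertices (4 * int i + 1, -3) = pos ` (avs (In i False V6) (In i False V5) (In i False V4) (In i False V3) (In i False V2) (In i False V1))"
  by (simp add: hex_vertices_avs img_avs sg_def algebra_simps)

lemma unit_verts: "(\<Union>c\<in>unitc i. hex_vertices c) = pos ` (UV i)"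
  unfolding unitc_def UV_def image_Un by (simp only: v1 v2 v3 v4 UN_insert UN_empty Un_empty_right Un_assoc)

lemma E_eq: "pyrene_E n = imE pos (CE n)"
  unfolding pyrene_E_def CE_def centres_eq imE_UN UN_UN_flatten unit_edges by (rule refl)

lemma UV_CV: "1 \<le> n \<Longrightarrow> (\<Union>i<n. UV i) = CV n"
proof (intro equalityI subsetI)
  fix v assume "v \<in> (\<Union>i<n. UV i)"
  then obtain i where "i < n" "v \<in> UV i" by blast
  then show "v \<in> CV n" unfolding UV_def avs_def CV_def by auto
next
  fix v assume n: "1 \<le> n" and "v \<in> CV n"
  then consider i s h where "v = In i s h" "i < n" | j s where "v = Bd j s" "j \<le> n"
    unfolding CV_def by blast
  then show "v \<in> (\<Union>i<n. UV i)"
  proof cases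
    case (1 i s h)
    then have "v \<in> UV i" unfolding UV_def avs_def by (cases s; cases h) simp_all
    then show ?thesis using 1 by blast
  next
    case (2 j s)
    show ?thesis
    proof (cases "j < n")
      case True
      then have "v \<in> UV j" using 2 unfolding UV_def avs_def by (cases s) simp_all
      then show ?thesis using True by blast
    next
      case False
      then have "j = Suc (n - 1)" "n - 1 < n" using 2 n by auto
      then have "v \<in> UV (n - 1)" using 2 unfolding UV_def avs_def by (cases s) simp_all
      then show ?thesis using \<open>n - 1 < n\<close> by blast
    qed
  qed
qed

lemma V_eq: assumes "1 \<le> n" shows "pyrene_V n = pos ` (CV n)"
proof -
  have "pyrene_V n = (\<Union>i<n. \<Union>c\<in>unitc i. hex_vertices c)" unfolding pyrene_V_def centres_eq by blast
  also have "\<dots> = (\<Union>i<n. pos ` UV i)" by (simp only: unit_verts)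
  also have "\<dots> = pos ` (\<Union>i<n. UV i)" by (simp only: image_UN)
  finally show ?thesis using UV_CV[OF assms] by simp
qed

datatype cf = F bool bool | A | B

definition lc :: "nat \<Rightarrow> bool \<Rightarrow> cv set" where "lc i s = {Bd i s, In i s V1}"
definition rc :: "nat \<Rightarrow> bool \<Rightarrow> cv set" where "rc i s = {In i s V5, Bd (Suc i) s}"
definition vt :: "nat \<Rightarrow> cv set" where "vt j = {Bd j True, Bd j False}"
definition mid :: "nat \<Rightarrow> cv set" where "mid i = {In i True V6, In i False V6}"
definition pp :: "nat \<Rightarrow> bool \<Rightarrow> hv \<Rightarrow> hv \<Rightarrow> cv set" where "pp i s a b = {In i s a, In i s b}"

lemmas edefs = lc_def rc_def vt_def mid_def pp_def

definition hexE :: "nat \<Rightarrow> bool \<Rightarrow> bool \<Rightarrow> cv set set" where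
  "hexE i s b = (if b then {pp i s V2 V3, pp i s V4 V5, pp i s V6 V1}
                 else {pp i s V1 V2, pp i s V3 V4, pp i s V5 V6})"

fun cfg :: "nat \<Rightarrow> cf \<Rightarrow> cv set set" where
  "cfg i (F b1 b2) = hexE i True b1 \<union> hexE i False b2"
| "cfg i A = {lc i True, lc i False, pp i True V2 V3, pp i True V4 V5, pp i False V2 V3, pp i False V4 V5, mid i}"
| "cfg i B = {rc i True, rc i False, pp i True V1 V2, pp i True V3 V4, pp i False V1 V2, pp i False V3 V4, mid i}"

definition valid :: "cf list \<Rightarrow> bool" where
  "valid xs \<longleftrightarrow> (\<forall>i. Suc i < length xs \<longrightarrow> \<not> (xs ! i = B \<and> xs ! Suc i = A))"

definition vst :: "cf list \<Rightarrow> nat \<Rightarrow> bool" where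
  "vst xs j \<longleftrightarrow> \<not> (0 < j \<and> xs ! (j - 1) = B) \<and> \<not> (j < length xs \<and> xs ! j = A)"

definition build :: "cf list \<Rightarrow> cv set set" where
  "build xs = (\<Union>i<length xs. cfg i (xs ! i)) \<union> {vt j | j. j \<le> length xs \<and> vst xs j}"

fun hmate :: "nat \<Rightarrow> bool \<Rightarrow> bool \<Rightarrow> hv \<Rightarrow> cv set" where
  "hmate i s False V1 = pp i s V1 V2" | "hmate i s False V2 = pp i s V1 V2"
| "hmate i s False V3 = pp i s V3 V4" | "hmate i s False V4 = pp i s V3 V4"
| "hmate i s False V5 = pp i s V5 V6" | "hmate i s False V6 = pp i s V5 V6"
| "hmate i s True V1 = pp i s V6 V1" | "hmate i s True V2 = pp i s V2 V3"
| "hmate i s True V3 = pp i s V2 V3" | "hmate i s True V4 = pp i s V4 V5"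
| "hmate i s True V5 = pp i s V4 V5" | "hmate i s True V6 = pp i s V6 V1"

fun mate :: "nat \<Rightarrow> cf \<Rightarrow> bool \<Rightarrow> hv \<Rightarrow> cv set" where
  "mate i (F b1 b2) s h = hmate i s (if s then b1 else b2) h"
| "mate i A s V1 = lc i s" | "mate i A s V2 = pp i s V2 V3" | "mate i A s V3 = pp i s V2 V3"
| "mate i A s V4 = pp i s V4 V5" | "mate i A s V5 = pp i s V4 V5" | "mate i A s V6 = mid i"
| "mate i B s V1 = pp i s V1 V2" | "mate i B s V2 = pp i s V1 V2" | "mate i B s V3 = pp i s V3 V4"
| "mate i B s V4 = pp i s V3 V4" | "mate i B s V5 = rc i s" | "mate i B s V6 = mid i"

lemma cfg_mate: "(e \<in> cfg i x \<and> In i s h \<in> e) \<longleftrightarrow> e = mate i x s h"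
  by (cases x; cases s; cases h) (auto simp: edefs hexE_def)

lemma cfg_In: "e \<in> cfg i' x \<Longrightarrow> In i s h \<in> e \<Longrightarrow> i' = i"
  by (cases x) (auto simp: edefs hexE_def split: if_splits)

lemma vt_In: "In i s h \<notin> vt j"
  by (simp add: vt_def)

lemma cfg_Bd: "(e \<in> cfg i x \<and> Bd j s \<in> e) \<longleftrightarrow> (x = A \<and> j = i \<and> e = lc i s) \<or> (x = B \<and> j = Suc i \<and> e = rc i s)"
  by (cases x; cases s) (auto simp: edefs hexE_def)

lemma build_In:
  assumes "i < length xs"
  shows "(e \<in> build xs \<and> In i s h \<in> e) \<longleftrightarrow> (e \<in> cfg i (xs ! i) \<and> In i s h \<in> e)"
proof
  assume a: "e \<in> build xs \<and> In i s h \<in> e"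
  then have "e \<in> (\<Union>i<length xs. cfg i (xs ! i))" unfolding build_def using vt_In by blast
  then obtain i' where "e \<in> cfg i' (xs ! i')" by blast
  moreover then have "i' = i" using a cfg_In by blast
  ultimately show "e \<in> cfg i (xs ! i) \<and> In i s h \<in> e" using a by blast
next
  assume "e \<in> cfg i (xs ! i) \<and> In i s h \<in> e"
  then show "e \<in> build xs \<and> In i s h \<in> e" unfolding build_def using assms by blast
qed

lemma build_In_mate:
  assumes "i < length xs"
  shows "(e \<in> build xs \<and> In i s h \<in> e) \<longleftrightarrow> e = mate i (xs ! i) s h"
  unfolding build_In[OF assms] cfg_mate by (rule refl)

lemma vt_Bd: "Bd j s \<in> vt j' \<longleftrightarrow> j' = j"
  by (cases s) (auto simp: vt_def)

lemma ex_unit_gen: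
  assumes "j \<le> (n::nat)"
  shows "(\<exists>i<n. (P i \<and> j = i) \<or> (Q i \<and> j = Suc i)) \<longleftrightarrow> (j < n \<and> P j) \<or> (0 < j \<and> Q (j - 1))"
proof
  assume "\<exists>i<n. (P i \<and> j = i) \<or> (Q i \<and> j = Suc i)"
  then obtain i where "i < n" "(P i \<and> j = i) \<or> (Q i \<and> j = Suc i)" by blast
  then show "(j < n \<and> P j) \<or> (0 < j \<and> Q (j - 1))" by auto
next
  assume "(j < n \<and> P j) \<or> (0 < j \<and> Q (j - 1))"
  then show "\<exists>i<n. (P i \<and> j = i) \<or> (Q i \<and> j = Suc i)"
  proof
    assume "j < n \<and> P j" then show ?thesis by blast
  next
    assume "0 < j \<and> Q (j - 1)"
    then have "j - 1 < n" "Q (j - 1) \<and> j = Suc (j - 1)" using assms by auto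
    then show ?thesis by blast
  qed
qed
lemma ex_unit_Bd:
  assumes "j \<le> n"
  shows "(\<exists>i<n. (xs ! i = A \<and> j = i \<and> e = lc i s) \<or> (xs ! i = B \<and> j = Suc i \<and> e = rc i s)) \<longleftrightarrow>
         (j < n \<and> xs ! j = A \<and> e = lc j s) \<or> (0 < j \<and> xs ! (j - 1) = B \<and> e = rc (j - 1) s)"
  using ex_unit_gen[OF assms, of "\<lambda>i. xs ! i = A \<and> e = lc i s" "\<lambda>i. xs ! i = B \<and> e = rc i s"]
  by (simp only: conj_assoc conj_left_commute[of "j = _"] conj_commute[of "j = _"])

lemma build_Bd0:
  assumes "j \<le> length xs"
  shows "(e \<in> build xs \<and> Bd j s \<in> e) \<longleftrightarrow>
        (\<exists>i<length xs. e \<in> cfg i (xs ! i) \<and> Bd j s \<in> e) \<or> (vst xs j \<and> e = vt j)"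
proof
  assume a: "e \<in> build xs \<and> Bd j s \<in> e"
  show "(\<exists>i<length xs. e \<in> cfg i (xs ! i) \<and> Bd j s \<in> e) \<or> (vst xs j \<and> e = vt j)"
  proof (cases "e \<in> (\<Union>i<length xs. cfg i (xs ! i))")
    case True
    then show ?thesis using a by blast
  next
    case False
    then obtain j' where "e = vt j'" "vst xs j'" using a unfolding build_def by blast
    moreover then have "j' = j" using a vt_Bd by blast
    ultimately show ?thesis by blast
  qed
next
  assume "(\<exists>i<length xs. e \<in> cfg i (xs ! i) \<and> Bd j s \<in> e) \<or> (vst xs j \<and> e = vt j)"
  then show "e \<in> build xs \<and> Bd j s \<in> e"
  proof
    assume "\<exists>i<length xs. e \<in> cfg i (xs ! i) \<and> Bd j s \<in> e"
    then show ?thesis unfolding build_def by blast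
  next
    assume "vst xs j \<and> e = vt j"
    then show ?thesis unfolding build_def using assms by (auto simp: vt_def)
  qed
qed

lemma build_Bd:
  assumes "valid xs" "j \<le> length xs"
  shows "(e \<in> build xs \<and> Bd j s \<in> e) \<longleftrightarrow>
     e = (if 0 < j \<and> xs ! (j - 1) = B then rc (j - 1) s else if j < length xs \<and> xs ! j = A then lc j s else vt j)"
proof -
  have "(e \<in> build xs \<and> Bd j s \<in> e) \<longleftrightarrow>
        (\<exists>i<length xs. e \<in> cfg i (xs ! i) \<and> Bd j s \<in> e) \<or> (vst xs j \<and> e = vt j)"
    by (rule build_Bd0[OF assms(2)])
  also have "\<dots> \<longleftrightarrow> (\<exists>i<length xs. (xs ! i = A \<and> j = i \<and> e = lc i s) \<or> (xs ! i = B \<and> j = Suc i \<and> e = rc i s))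
       \<or> (vst xs j \<and> e = vt j)"
    by (simp only: cfg_Bd)
  also have "\<dots> \<longleftrightarrow> (j < length xs \<and> xs ! j = A \<and> e = lc j s) \<or> (0 < j \<and> xs ! (j - 1) = B \<and> e = rc (j - 1) s)
       \<or> (vst xs j \<and> e = vt j)"
    by (simp only: ex_unit_Bd[OF assms(2)] disj_assoc)
  also have "\<dots> \<longleftrightarrow> e = (if 0 < j \<and> xs ! (j - 1) = B then rc (j - 1) s else if j < length xs \<and> xs ! j = A then lc j s else vt j)"
  proof -
    have "\<not> (0 < j \<and> xs ! (j - 1) = B \<and> j < length xs \<and> xs ! j = A)"
      using assms(1) unfolding valid_def by (metis Suc_pred')
    then show ?thesis unfolding vst_def by auto
  qed
  finally show ?thesis .
qed

lemma cfg_sub_UE: "cfg i x \<subseteq> UE i"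
  by (cases x) (auto simp: UE_def ahex_def edefs hexE_def doubleton_eq_iff)

lemma vt_CE: assumes "j \<le> n" "1 \<le> n" shows "vt j \<in> CE n"
proof (cases "j < n")
  case True
  have "vt j \<in> UE j" by (simp add: UE_def ahex_def vt_def doubleton_eq_iff)
  then show ?thesis using True unfolding CE_def by blast
next
  case False
  then have j: "j = Suc (n - 1)" "n - 1 < n" using assms by auto
  have "vt (Suc (n - 1)) \<in> UE (n - 1)" by (simp add: UE_def ahex_def vt_def doubleton_eq_iff)
  then show ?thesis using j unfolding CE_def by (metis UN_I lessThan_iff)
qed

lemma build_sub: assumes "1 \<le> length xs" shows "build xs \<subseteq> CE (length xs)"
proof
  fix e assume "e \<in> build xs"
  then consider i where "i < length xs" "e \<in> cfg i (xs ! i)" | j where "e = vt j" "j \<le> length xs"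
    unfolding build_def by blast
  then show "e \<in> CE (length xs)"
  proof cases
    case (1 i)
    then show ?thesis using cfg_sub_UE unfolding CE_def by blast
  next
    case (2 j)
    then show ?thesis using vt_CE assms by blast
  qed
qed

lemma build_pm:
  assumes v: "valid xs" and n: "length xs = n" "1 \<le> n"
  shows "perfect_matching (CV n) (CE n) (build xs)"
  unfolding perfect_matching_def
proof (intro conjI ballI)
  show "build xs \<subseteq> CE n" using build_sub n by blast
next
  fix x assume "x \<in> CV n"
  then consider i s h where "x = In i s h" "i < n" | j s where "x = Bd j s" "j \<le> n"
    unfolding CV_def by blast
  then show "\<exists>!e. e \<in> build xs \<and> x \<in> e"
  proof cases
    case (1 i s h)
    then show ?thesis using build_In_mate[of i xs e s h for e] n by simp
  next
    case (2 j s)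
    then show ?thesis using build_Bd[OF v, of j e s for e] n by simp
  qed
qed

fun incI :: "nat \<Rightarrow> bool \<Rightarrow> hv \<Rightarrow> cv set set" where
  "incI i s V1 = {lc i s, pp i s V1 V2, pp i s V6 V1}"
| "incI i s V2 = {pp i s V1 V2, pp i s V2 V3}"
| "incI i s V3 = {pp i s V2 V3, pp i s V3 V4}"
| "incI i s V4 = {pp i s V3 V4, pp i s V4 V5}"
| "incI i s V5 = {pp i s V4 V5, pp i s V5 V6, rc i s}"
| "incI i s V6 = {pp i s V5 V6, pp i s V6 V1, mid i}"

lemma UE_In: "e \<in> UE i' \<Longrightarrow> In i s h \<in> e \<Longrightarrow> e \<in> incI i s h"
  unfolding UE_def ahex_def
  by (cases s; cases h) (auto simp: edefs doubleton_eq_iff)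

lemma UE_In_idx: "e \<in> UE i' \<Longrightarrow> In i s h \<in> e \<Longrightarrow> i' = i"
  unfolding UE_def ahex_def by auto

lemma CE_In: "e \<in> CE n \<Longrightarrow> In i s h \<in> e \<Longrightarrow> e \<in> incI i s h \<and> i < n"
  unfolding CE_def using UE_In UE_In_idx by blast

lemma UE_Bd: "e \<in> UE i \<Longrightarrow> Bd j s \<in> e \<Longrightarrow> (e = lc j s \<and> i = j) \<or> (e = rc i s \<and> j = Suc i) \<or> e = vt j"
  unfolding UE_def ahex_def
  by (cases s) (auto simp: edefs doubleton_eq_iff)

lemma CE_Bd: "e \<in> CE n \<Longrightarrow> Bd j s \<in> e \<Longrightarrow> (e = lc j s \<and> j < n) \<or> (e = rc (j - 1) s \<and> 0 < j) \<or> e = vt j"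
  unfolding CE_def using UE_Bd by fastforce

lemma incI_mem: "e \<in> incI i s h \<Longrightarrow> In i s h \<in> e"
  by (cases h) (auto simp: edefs)

lemma pm_cover: "perfect_matching V E M \<Longrightarrow> v \<in> V \<Longrightarrow> \<exists>e\<in>M. v \<in> e"
  unfolding perfect_matching_def by blast

lemma pm_excl: "perfect_matching V E M \<Longrightarrow> v \<in> V \<Longrightarrow> e1 \<in> M \<Longrightarrow> e2 \<in> M \<Longrightarrow> v \<in> e1 \<Longrightarrow> v \<in> e2 \<Longrightarrow> e1 = e2"
  unfolding perfect_matching_def by blast

lemma pm_sub: "perfect_matching V E M \<Longrightarrow> M \<subseteq> E"
  unfolding perfect_matching_def by blast

lemma In_CV: "i < n \<Longrightarrow> In i s h \<in> CV n" unfolding CV_def by blast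
lemma Bd_CV: "j \<le> n \<Longrightarrow> Bd j s \<in> CV n" unfolding CV_def by blast

lemma cover_In:
  assumes pm: "perfect_matching (CV n) (CE n) M" and i: "i < n"
  shows "\<exists>e\<in>incI i s h. e \<in> M"
proof -
  obtain e where "e \<in> M" "In i s h \<in> e" using pm_cover[OF pm In_CV[OF i]] by blast
  moreover then have "e \<in> CE n" using pm_sub[OF pm] by blast
  ultimately show ?thesis using CE_In by blast
qed

lemma excl_In:
  assumes pm: "perfect_matching (CV n) (CE n) M" and i: "i < n"
    and "e1 \<in> incI i s h" "e2 \<in> incI i s h" "e1 \<noteq> e2"
  shows "\<not> (e1 \<in> M \<and> e2 \<in> M)"
  using pm_excl[OF pm In_CV[OF i]] incI_mem assms(3-5) by blast

definition sideok :: "bool \<Rightarrow> bool \<Rightarrow> bool \<Rightarrow> bool \<Rightarrow> bool \<Rightarrow> bool \<Rightarrow> bool \<Rightarrow> bool \<Rightarrow> bool \<Rightarrow> bool" where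
  "sideok l a12 a23 a34 a45 a56 a61 r m \<longleftrightarrow>
    (l \<or> a12 \<or> a61) \<and> \<not>(l \<and> a12) \<and> \<not>(l \<and> a61) \<and> \<not>(a12 \<and> a61) \<and>
    (a12 \<or> a23) \<and> \<not>(a12 \<and> a23) \<and> (a23 \<or> a34) \<and> \<not>(a23 \<and> a34) \<and> (a34 \<or> a45) \<and> \<not>(a34 \<and> a45) \<and>
    (a45 \<or> a56 \<or> r) \<and> \<not>(a45 \<and> a56) \<and> \<not>(a45 \<and> r) \<and> \<not>(a56 \<and> r) \<and>
    (a56 \<or> a61 \<or> m) \<and> \<not>(a56 \<and> a61) \<and> \<not>(a56 \<and> m) \<and> \<not>(a61 \<and> m)"

lemma side_conseq:
  assumes "sideok l a12 a23 a34 a45 a56 a61 r m"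
  shows "(l \<longrightarrow> a23 \<and> a45 \<and> m \<and> \<not>r) \<and> (r \<longrightarrow> a12 \<and> a34 \<and> m \<and> \<not>l) \<and>
         (\<not>l \<and> \<not>r \<longrightarrow> \<not>m \<and> (a61 \<longrightarrow> a23 \<and> a45) \<and> (\<not>a61 \<longrightarrow> a12 \<and> a34 \<and> a56))"
  using assms unfolding sideok_def by blast

lemma side_facts:
  assumes pm: "perfect_matching (CV n) (CE n) M" and i: "i < n"
  shows "sideok (lc i s \<in> M) (pp i s V1 V2 \<in> M) (pp i s V2 V3 \<in> M) (pp i s V3 V4 \<in> M)
     (pp i s V4 V5 \<in> M) (pp i s V5 V6 \<in> M) (pp i s V6 V1 \<in> M) (rc i s \<in> M) (mid i \<in> M)"
proof -
  note c = cover_In[OF pm i, of s]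
  note x = excl_In[OF pm i, of _ s]
  show ?thesis unfolding sideok_def
    using c[of V1] c[of V2] c[of V3] c[of V4] c[of V5] c[of V6]
      x[of "lc i s" V1 "pp i s V1 V2"] x[of "lc i s" V1 "pp i s V6 V1"] x[of "pp i s V1 V2" V1 "pp i s V6 V1"]
      x[of "pp i s V1 V2" V2 "pp i s V2 V3"] x[of "pp i s V2 V3" V3 "pp i s V3 V4"] x[of "pp i s V3 V4" V4 "pp i s V4 V5"]
      x[of "pp i s V4 V5" V5 "pp i s V5 V6"] x[of "pp i s V4 V5" V5 "rc i s"] x[of "pp i s V5 V6" V5 "rc i s"]
      x[of "pp i s V5 V6" V6 "pp i s V6 V1"] x[of "pp i s V5 V6" V6 "mid i"] x[of "pp i s V6 V1" V6 "mid i"]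
    by (simp add: edefs doubleton_eq_iff)
qed

lemma bd_facts:
  assumes pm: "perfect_matching (CV n) (CE n) M" and j: "j \<le> n"
  shows "((0 < j \<and> rc (j - 1) s \<in> M) \<or> (j < n \<and> lc j s \<in> M) \<or> vt j \<in> M) \<and>
         \<not> ((0 < j \<and> rc (j - 1) s \<in> M) \<and> (j < n \<and> lc j s \<in> M)) \<and>
         \<not> ((0 < j \<and> rc (j - 1) s \<in> M) \<and> vt j \<in> M) \<and>
         \<not> ((j < n \<and> lc j s \<in> M) \<and> vt j \<in> M)"
proof -
  have v: "Bd j s \<in> CV n" using Bd_CV[OF j] .
  obtain e where e: "e \<in> M" "Bd j s \<in> e" using pm_cover[OF pm v] by blast
  then have "e \<in> CE n" using pm_sub[OF pm] by blast
  then have "(e = lc j s \<and> j < n) \<or> (e = rc (j - 1) s \<and> 0 < j) \<or> e = vt j" using CE_Bd e(2) by blast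
  then have c: "(0 < j \<and> rc (j - 1) s \<in> M) \<or> (j < n \<and> lc j s \<in> M) \<or> vt j \<in> M" using e(1) by blast
  have m1: "Bd j s \<in> rc (j - 1) s" if "0 < j" using that by (simp add: rc_def)
  have m2: "Bd j s \<in> lc j s" by (simp add: lc_def)
  have m3: "Bd j s \<in> vt j" by (cases s) (simp_all add: vt_def)
  have d1: "rc (j - 1) s \<noteq> lc j s" by (simp add: rc_def lc_def doubleton_eq_iff)
  have d2: "rc (j - 1) s \<noteq> vt j" by (simp add: rc_def vt_def doubleton_eq_iff)
  have d3: "lc j s \<noteq> vt j" by (simp add: lc_def vt_def doubleton_eq_iff)
  note x = pm_excl[OF pm v]
  show ?thesis using c x m1 m2 m3 d1 d2 d3 by metis
qed

lemma bool_bd: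
  assumes "(lT \<or> rT \<or> v) \<and> \<not>(lT \<and> rT) \<and> \<not>(lT \<and> v) \<and> \<not>(rT \<and> v)"
    "(lF \<or> rF \<or> v) \<and> \<not>(lF \<and> rF) \<and> \<not>(lF \<and> v) \<and> \<not>(rF \<and> v)" "lT = lF"
  shows "rT = rF"
  using assms by blast

lemma bool_unit:
  assumes "sideok lT a12 a23 a34 a45 a56 a61 rT m" "sideok lF b12 b23 b34 b45 b56 b61 rF m" "lT = lF"
  shows "rT = rF"
  using side_conseq[OF assms(1)] side_conseq[OF assms(2)] assms(3) by blast

lemma untwist:
  assumes pm: "perfect_matching (CV n) (CE n) M"
  shows "j \<le> n \<Longrightarrow> (0 < j \<and> rc (j - 1) True \<in> M) = (0 < j \<and> rc (j - 1) False \<in> M)"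
proof (induction j)
  case 0
  then show ?case by simp
next
  case (Suc j)
  then have jn: "j < n" by simp
  have "(j < n \<and> lc j True \<in> M) = (j < n \<and> lc j False \<in> M)"
    using bool_bd[OF bd_facts[OF pm, of j True] bd_facts[OF pm, of j False]] Suc by simp
  then have "lc j True \<in> M \<longleftrightarrow> lc j False \<in> M" using jn by simp
  then have "rc j True \<in> M \<longleftrightarrow> rc j False \<in> M"
    using bool_unit[OF side_facts[OF pm jn, of True] side_facts[OF pm jn, of False]] by blast
  then show ?case by simp
qed

lemma lc_consistent:
  assumes pm: "perfect_matching (CV n) (CE n) M" and i: "i < n"
  shows "lc i True \<in> M \<longleftrightarrow> lc i False \<in> M"
proof -
  have "(i < n \<and> lc i True \<in> M) = (i < n \<and> lc i False \<in> M)"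
    using bool_bd[OF bd_facts[OF pm, of i True] bd_facts[OF pm, of i False]] untwist[OF pm, of i] i by simp
  then show ?thesis using i by simp
qed

lemma rc_consistent:
  assumes pm: "perfect_matching (CV n) (CE n) M" and i: "i < n"
  shows "rc i True \<in> M \<longleftrightarrow> rc i False \<in> M"
  using untwist[OF pm, of "Suc i"] i by simp

definition dec :: "cv set set \<Rightarrow> nat \<Rightarrow> cf" where
  "dec M i = (if lc i True \<in> M then A else if rc i True \<in> M then B
              else F (pp i True V6 V1 \<in> M) (pp i False V6 V1 \<in> M))"

lemma cfg_dec_sub:
  assumes pm: "perfect_matching (CV n) (CE n) M" and i: "i < n"
  shows "cfg i (dec M i) \<subseteq> M"
proof -
  note sT = side_conseq[OF side_facts[OF pm i, of True]]
  note sF = side_conseq[OF side_facts[OF pm i, of False]]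
  note lcc = lc_consistent[OF pm i]
  note rcc = rc_consistent[OF pm i]
  consider "lc i True \<in> M" | "lc i True \<notin> M" "rc i True \<in> M" | "lc i True \<notin> M" "rc i True \<notin> M" by blast
  then show ?thesis
  proof cases
    case 1
    then show ?thesis using sT sF lcc unfolding dec_def by simp
  next
    case 2
    then show ?thesis using sT sF lcc rcc unfolding dec_def by simp
  next
    case 3
    then show ?thesis using sT sF lcc rcc unfolding dec_def by (auto simp: hexE_def)
  qed
qed

definition decs :: "nat \<Rightarrow> cv set set \<Rightarrow> cf list" where
  "decs n M = map (dec M) [0..<n]"

lemma decs_len[simp]: "length (decs n M) = n" by (simp add: decs_def)
lemma decs_nth[simp]: "i < n \<Longrightarrow> decs n M ! i = dec M i" by (simp add: decs_def)

lemma vt_dec_in: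
  assumes pm: "perfect_matching (CV n) (CE n) M" and j: "j \<le> n" and v: "vst (decs n M) j"
  shows "vt j \<in> M"
proof -
  have nR: "\<not> (j < n \<and> lc j True \<in> M)"
    using v unfolding vst_def by (auto simp: dec_def)
  have nL: "\<not> (0 < j \<and> rc (j - 1) True \<in> M)"
  proof
    assume a: "0 < j \<and> rc (j - 1) True \<in> M"
    then have jn: "j - 1 < n" using j by (cases j) auto
    note sT = side_conseq[OF side_facts[OF pm jn, of True]]
    have "dec M (j - 1) = B" using a sT unfolding dec_def by auto
    then show False using v a jn unfolding vst_def by simp
  qed
  show ?thesis using bd_facts[OF pm j, of True] nR nL by blast
qed

lemma decs_valid:
  assumes pm: "perfect_matching (CV n) (CE n) M"
  shows "valid (decs n M)"
  unfolding valid_def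
proof (intro allI impI notI)
  fix i assume i: "Suc i < length (decs n M)" and a: "decs n M ! i = B \<and> decs n M ! Suc i = A"
  then have i': "i < n" "Suc i < n" by auto
  then have "dec M i = B" "dec M (Suc i) = A" using a by auto
  then have "rc i True \<in> M" "lc (Suc i) True \<in> M" unfolding dec_def
    by (auto split: if_splits)
  moreover have "Bd (Suc i) True \<in> rc i True" "Bd (Suc i) True \<in> lc (Suc i) True" by (simp_all add: edefs)
  moreover have "rc i True \<noteq> lc (Suc i) True" by (simp add: edefs doubleton_eq_iff)
  ultimately show False using pm_excl[OF pm Bd_CV[of "Suc i" n]] i' by auto
qed

lemma build_decs_sub:
  assumes pm: "perfect_matching (CV n) (CE n) M"
  shows "build (decs n M) \<subseteq> M"
  unfolding build_def
proof (intro Un_least subsetI)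
  fix e assume "e \<in> (\<Union>i<length (decs n M). cfg i (decs n M ! i))"
  then obtain i where "i < n" "e \<in> cfg i (dec M i)" by auto
  then show "e \<in> M" using cfg_dec_sub[OF pm] by blast
next
  fix e assume "e \<in> {vt j |j. j \<le> length (decs n M) \<and> vst (decs n M) j}"
  then obtain j where "e = vt j" "j \<le> n" "vst (decs n M) j" by auto
  then show "e \<in> M" using vt_dec_in[OF pm] by blast
qed

lemma pm_sub_eq:
  assumes "perfect_matching V E M1" "perfect_matching V E M2" "M1 \<subseteq> M2" "\<forall>e\<in>E. \<exists>v\<in>V. v \<in> e"
  shows "M1 = M2"
proof
  show "M2 \<subseteq> M1"
  proof
    fix e assume e: "e \<in> M2"
    then have "e \<in> E" using assms(2) unfolding perfect_matching_def by blast
    then obtain v where v: "v \<in> V" "v \<in> e" using assms(4) by blast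
    then obtain e' where "e' \<in> M1" "v \<in> e'" using assms(1) unfolding perfect_matching_def by blast
    moreover then have "e' = e" using assms(2,3) v e unfolding perfect_matching_def by blast
    ultimately show "e \<in> M1" by simp
  qed
qed (rule assms(3))

lemma UE_sub_UV: "e \<in> UE i \<Longrightarrow> e \<subseteq> UV i"
  by (auto simp: UE_def ahex_def UV_def avs_def)

lemma UE_ne: "e \<in> UE i \<Longrightarrow> e \<noteq> {}"
  by (auto simp: UE_def ahex_def)

lemma CE_meets: assumes "1 \<le> n" shows "\<forall>e\<in>CE n. \<exists>v\<in>CV n. v \<in> e"
proof
  fix e assume "e \<in> CE n"
  then obtain i where i: "i < n" "e \<in> UE i" unfolding CE_def by blast
  then have "e \<subseteq> CV n" using UE_sub_UV UV_CV[OF assms] by blast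
  then show "\<exists>v\<in>CV n. v \<in> e" using UE_ne[OF i(2)] by blast
qed

theorem pm_is_build:
  assumes pm: "perfect_matching (CV n) (CE n) M" and n: "1 \<le> n"
  shows "M = build (decs n M) \<and> valid (decs n M)"
proof -
  have v: "valid (decs n M)" by (rule decs_valid[OF pm])
  have "perfect_matching (CV n) (CE n) (build (decs n M))" using build_pm[OF v _ n] by simp
  then have "build (decs n M) = M" using pm_sub_eq[OF _ pm build_decs_sub[OF pm] CE_meets[OF n]] by blast
  then show ?thesis using v by simp
qed

definition decm :: "nat \<Rightarrow> cf \<Rightarrow> cf" where
  "decm i x = (if lc i True = mate i x True V1 then A else if rc i True = mate i x True V5 then B
      else F (pp i True V6 V1 = mate i x True V1) (pp i False V6 V1 = mate i x False V1))"

lemma decm_F: "decm i (F b1 b2) = F b1 b2"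
  unfolding decm_def by (cases b1; cases b2) (simp_all add: edefs doubleton_eq_iff)

lemma decm_id: "decm i x = x"
proof (cases x)
  case (F b1 b2) then show ?thesis by (simp add: decm_F)
next
  case A then show ?thesis by (simp add: decm_def edefs doubleton_eq_iff)
next
  case B then show ?thesis by (simp add: decm_def edefs doubleton_eq_iff)
qed

lemma dec_build:
  assumes i: "i < length xs"
  shows "dec (build xs) i = xs ! i"
proof -
  have l: "lc i True \<in> build xs \<longleftrightarrow> lc i True = mate i (xs ! i) True V1"
    using build_In_mate[OF i, of "lc i True" True V1] by (simp add: lc_def)
  have r: "rc i True \<in> build xs \<longleftrightarrow> rc i True = mate i (xs ! i) True V5"
    using build_In_mate[OF i, of "rc i True" True V5] by (simp add: rc_def)
  have p1: "pp i True V6 V1 \<in> build xs \<longleftrightarrow> pp i True V6 V1 = mate i (xs ! i) True V1"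
    using build_In_mate[OF i, of "pp i True V6 V1" True V1] by (simp add: pp_def)
  have p2: "pp i False V6 V1 \<in> build xs \<longleftrightarrow> pp i False V6 V1 = mate i (xs ! i) False V1"
    using build_In_mate[OF i, of "pp i False V6 V1" False V1] by (simp add: pp_def)
  show ?thesis unfolding dec_def l r p1 p2 using decm_id[of i "xs ! i"] unfolding decm_def .
qed

lemma decs_build: "decs (length xs) (build xs) = xs"
  by (rule nth_equalityI) (simp_all add: dec_build)

lemma inj_build: "inj_on build {xs. length xs = n}"
proof (rule inj_onI)
  fix x y assume "x \<in> {xs. length xs = n}" "y \<in> {xs. length xs = n}" "build x = build y"
  then have "decs (length x) (build x) = decs (length y) (build y)" by simp
  then show "x = y" by (simp only: decs_build)
qed

fun w :: "cf \<Rightarrow> nat" where "w (F _ _) = 2" | "w A = 1" | "w B = 1"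

definition wt :: "cf list \<Rightarrow> nat" where "wt xs = (\<Sum>i<length xs. w (xs ! i))"

fun sel :: "nat \<Rightarrow> cf \<Rightarrow> cv set set" where
  "sel i (F b1 b2) = {if b1 then pp i True V6 V1 else pp i True V5 V6, if b2 then pp i False V6 V1 else pp i False V5 V6}"
| "sel i A = {lc i True}"
| "sel i B = {rc i True}"

lemma sel_sub: "sel i x \<subseteq> cfg i x"
  by (cases x) (auto simp: hexE_def)

lemma card_sel: "card (sel i x) = w x"
  by (cases x) (auto simp: edefs doubleton_eq_iff)

lemma sel_In: "e \<in> sel i x \<Longrightarrow> \<exists>s h. In i s h \<in> e"
  by (cases x) (auto simp: edefs split: if_splits)

lemma cfg_has_In: "e \<in> cfg i x \<Longrightarrow> \<exists>s h. In i s h \<in> e"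
  by (cases x) (auto simp: edefs hexE_def split: if_splits)

lemma cfg_disj: "i \<noteq> i' \<Longrightarrow> cfg i x \<inter> cfg i' y = {}"
  using cfg_has_In cfg_In by blast

lemma sel_det: "sel i x \<subseteq> cfg i y \<Longrightarrow> x = y"
  by (cases x; cases y) (auto simp: edefs hexE_def doubleton_eq_iff split: if_splits)

lemma finite_cfg: "finite (cfg i x)"
  by (cases x) (auto simp: hexE_def)

lemma finite_UE: "finite (UE i)" by (simp add: UE_def ahex_def)
lemma finite_CE: "finite (CE n)" by (simp add: CE_def finite_UE)

definition S0 :: "cf list \<Rightarrow> cv set set" where
  "S0 xs = (\<Union>i<length xs. sel i (xs ! i))"

lemma card_S0: "card (S0 xs) = wt xs"
proof -
  have "card (S0 xs) = (\<Sum>i<length xs. card (sel i (xs ! i)))"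
    unfolding S0_def
  proof (rule card_UN_disjoint)
    show "finite {..<length xs}" by simp
    show "\<forall>i\<in>{..<length xs}. finite (sel i (xs ! i))" by (metis finite_cfg finite_subset sel_sub)
    show "\<forall>i\<in>{..<length xs}. \<forall>j\<in>{..<length xs}. i \<noteq> j \<longrightarrow> sel i (xs ! i) \<inter> sel j (xs ! j) = {}"
      using cfg_disj sel_sub by blast
  qed
  then show ?thesis unfolding wt_def by (simp add: card_sel)
qed

lemma S0_sub: "S0 xs \<subseteq> build xs"
  unfolding S0_def build_def using sel_sub by blast

lemma S0_forces:
  assumes v: "valid xs" and n: "length xs = n" "1 \<le> n"
    and pm: "perfect_matching (CV n) (CE n) M'" and sub: "S0 xs \<subseteq> M'"
  shows "M' = build xs"
proof -
  define ys where "ys = decs n M'"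
  have M': "M' = build ys" and vy: "valid ys" using pm_is_build[OF pm n(2)] unfolding ys_def by auto
  have ly: "length ys = n" unfolding ys_def by simp
  have "ys ! i = xs ! i" if i: "i < n" for i
  proof -
    have "sel i (xs ! i) \<subseteq> cfg i (ys ! i)"
    proof
      fix e assume e: "e \<in> sel i (xs ! i)"
      then have "e \<in> build ys" using sub M' i n unfolding S0_def by blast
      moreover obtain s h where "In i s h \<in> e" using sel_In[OF e] by blast
      ultimately show "e \<in> cfg i (ys ! i)" using build_In[of i ys e s h] i ly by blast
    qed
    then show ?thesis using sel_det by metis
  qed
  then have "ys = xs" using ly n by (simp add: nth_equalityI)
  then show ?thesis using M' by simp
qed

definition isF :: "cf \<Rightarrow> bool" where "isF x = (case x of F _ _ \<Rightarrow> True | _ \<Rightarrow> False)"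

fun flipv :: "cf \<Rightarrow> bool \<Rightarrow> cf" where
  "flipv (F b1 b2) b = (if b then F (\<not>b1) b2 else F b1 (\<not>b2))"
| "flipv A b = F True True"
| "flipv B b = F False False"

lemma isF_flipv: "isF (flipv x b)" by (cases x) (auto simp: isF_def)

lemma flipv_ne: "b \<or> isF x \<Longrightarrow> flipv x b \<noteq> x" by (cases x) (auto simp: isF_def)

lemma upd_nth_cases: "xs[i := y] ! k = xs ! k \<or> xs[i := y] ! k = y"
  by (metis list_update_beyond nth_list_update_eq nth_list_update_neq not_le)

lemma upd_A: "isF y \<Longrightarrow> xs[i := y] ! k = A \<Longrightarrow> xs ! k = A"
  using upd_nth_cases[of xs i y k] by (auto simp: isF_def)

lemma upd_B: "isF y \<Longrightarrow> xs[i := y] ! k = B \<Longrightarrow> xs ! k = B"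
  using upd_nth_cases[of xs i y k] by (auto simp: isF_def)

lemma valid_upd: "valid xs \<Longrightarrow> isF y \<Longrightarrow> valid (xs[i := y])"
  unfolding valid_def using upd_A upd_B by (metis length_list_update)

lemma vst_upd: "vst xs j \<Longrightarrow> isF y \<Longrightarrow> vst (xs[i := y]) j"
  unfolding vst_def using upd_A upd_B by (metis length_list_update)

lemma build_diff:
  assumes y: "isF y" and i: "i < length xs"
  shows "build xs - build (xs[i := y]) \<subseteq> cfg i (xs ! i) - cfg i y"
proof
  fix e assume e: "e \<in> build xs - build (xs[i := y])"
  then consider i' where "i' < length xs" "e \<in> cfg i' (xs ! i')" | j where "e = vt j" "j \<le> length xs" "vst xs j"
    unfolding build_def by blast
  then show "e \<in> cfg i (xs ! i) - cfg i y"
  proof cases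
    case (1 i')
    show ?thesis
    proof (cases "i' = i")
      case True
      have "xs[i := y] ! i = y" using i by simp
      then have "cfg i y \<subseteq> build (xs[i := y])" using i unfolding build_def by auto
      then have "e \<notin> cfg i y" using e by blast
      then show ?thesis using 1 True by blast
    next
      case False
      then have "xs[i := y] ! i' = xs ! i'" by simp
      then have "e \<in> cfg i' (xs[i := y] ! i')" using 1 by simp
      then have "e \<in> build (xs[i := y])" using 1 unfolding build_def by auto
      then show ?thesis using e by blast
    qed
  next
    case (2 j)
    then have "e \<in> build (xs[i := y])" using vst_upd[OF 2(3) y, of i] unfolding build_def by auto
    then show ?thesis using e by blast
  qed
qed

lemma D_disj:
  "(cfg i (F b1 b2) - cfg i (F (\<not>b1) b2)) \<inter> (cfg i (F b1 b2) - cfg i (F b1 (\<not>b2))) = {}"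
  by (cases b1; cases b2) (auto simp: hexE_def edefs doubleton_eq_iff)

lemma card_flips: "card {b. b \<or> isF x} = w x"
proof -
  have "{b. b \<or> isF x} = (if isF x then {True, False} else {True})" by auto
  then show ?thesis by (cases x) (simp_all add: isF_def)
qed

definition Phi :: "cf list \<Rightarrow> (nat \<times> bool) set" where
  "Phi xs = Sigma {..<length xs} (\<lambda>i. {b. b \<or> isF (xs ! i)})"

lemma card_Phi: "card (Phi xs) = wt xs"
  unfolding Phi_def wt_def by (simp add: card_flips)

definition DD :: "cf list \<Rightarrow> nat \<times> bool \<Rightarrow> cv set set" where
  "DD xs p = cfg (fst p) (xs ! fst p) - cfg (fst p) (flipv (xs ! fst p) (snd p))"

lemma DD_disj:
  assumes "p \<in> Phi xs" "q \<in> Phi xs" "p \<noteq> q"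
  shows "DD xs p \<inter> DD xs q = {}"
proof -
  obtain i b i' b' where pq: "p = (i, b)" "q = (i', b')" by (cases p; cases q) auto
  show ?thesis
  proof (cases "i = i'")
    case False
    then show ?thesis using cfg_disj[OF False] unfolding DD_def pq by auto
  next
    case True
    then have bb: "b \<noteq> b'" using assms(3) pq by simp
    then have "isF (xs ! i)" using assms(1,2) pq True unfolding Phi_def by auto
    then obtain b1 b2 where x: "xs ! i = F b1 b2" unfolding isF_def by (cases "xs ! i") auto
    show ?thesis
    proof (cases b)
      case True
      then have "b' = False" using bb by simp
      then show ?thesis using D_disj[of i b1 b2] unfolding DD_def pq \<open>i = i'\<close>[symmetric] using x True by simp
    next
      case False
      then have "b' = True" using bb by simp
      then show ?thesis using D_disj[of i b1 b2] unfolding DD_def pq \<open>i = i'\<close>[symmetric] using x False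
        by (simp add: Int_commute)
    qed
  qed
qed

lemma hit_DD:
  assumes v: "valid xs" and n: "length xs = n" "1 \<le> n"
    and fs: "forcing_set (CV n) (CE n) (build xs) S" and p: "p \<in> Phi xs"
  shows "\<exists>e\<in>S. e \<in> DD xs p"
proof -
  obtain i b where pib: "p = (i, b)" by (cases p)
  then have i: "i < length xs" and bF: "b \<or> isF (xs ! i)" using p unfolding Phi_def by auto
  define ys where "ys = xs[i := flipv (xs ! i) b]"
  have vy: "valid ys" unfolding ys_def by (rule valid_upd[OF v isF_flipv])
  have ly: "length ys = n" unfolding ys_def using n by simp
  have pmy: "perfect_matching (CV n) (CE n) (build ys)" by (rule build_pm[OF vy ly n(2)])
  have "\<not> S \<subseteq> build ys"
  proof
    assume "S \<subseteq> build ys"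
    then have "build ys = build xs" using fs pmy unfolding forcing_set_def by blast
    then have "decs (length ys) (build ys) = decs (length xs) (build xs)" using ly n by simp
    then have "ys = xs" by (simp only: decs_build)
    then have "ys ! i = xs ! i" by simp
    moreover have "ys ! i = flipv (xs ! i) b" unfolding ys_def using i by simp
    ultimately show False using flipv_ne[OF bF] by simp
  qed
  then obtain e where e: "e \<in> S" "e \<notin> build ys" by blast
  then have "e \<in> build xs" using fs unfolding forcing_set_def by blast
  then have "e \<in> cfg i (xs ! i) - cfg i (flipv (xs ! i) b)"
    using build_diff[OF isF_flipv[of "xs ! i" b] i] e(2) unfolding ys_def by blast
  then show ?thesis using e(1) unfolding DD_def pib by auto
qed

lemma lower_bound:
  assumes v: "valid xs" and n: "length xs = n" "1 \<le> n"
    and fs: "forcing_set (CV n) (CE n) (build xs) S"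
  shows "wt xs \<le> card S"
proof -
  define g where "g p = (SOME e. e \<in> S \<and> e \<in> DD xs p)" for p
  have g: "g p \<in> S \<and> g p \<in> DD xs p" if "p \<in> Phi xs" for p
  proof -
    have "\<exists>e. e \<in> S \<and> e \<in> DD xs p" using hit_DD[OF v n fs that] by blast
    then show ?thesis unfolding g_def by (rule someI_ex)
  qed
  have "inj_on g (Phi xs)"
  proof (rule inj_onI)
    fix p q assume "p \<in> Phi xs" "q \<in> Phi xs" "g p = g q"
    show "p = q"
    proof (rule ccontr)
      assume "p \<noteq> q"
      then have "DD xs p \<inter> DD xs q = {}" using DD_disj \<open>p \<in> Phi xs\<close> \<open>q \<in> Phi xs\<close> by blast
      moreover have "g p \<in> DD xs p" "g q \<in> DD xs q" using g \<open>p \<in> Phi xs\<close> \<open>q \<in> Phi xs\<close> by auto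
      ultimately show False using \<open>g p = g q\<close> by auto
    qed
  qed
  moreover have "g ` Phi xs \<subseteq> S" using g by auto
  moreover have "finite S"
  proof -
    have "S \<subseteq> CE n" using fs build_sub[of xs] n unfolding forcing_set_def by auto
    then show ?thesis using finite_CE finite_subset by blast
  qed
  ultimately have "card (Phi xs) \<le> card S" by (rule card_inj_on_le)
  then show ?thesis by (simp add: card_Phi)
qed

theorem fn_build:
  assumes v: "valid xs" and n: "length xs = n" "1 \<le> n"
  shows "forcing_number (CV n) (CE n) (build xs) = wt xs"
  unfolding forcing_number_def
proof (rule Least_equality)
  have "forcing_set (CV n) (CE n) (build xs) (S0 xs)"
    unfolding forcing_set_def using S0_sub S0_forces[OF v n] by blast
  then show "\<exists>S. forcing_set (CV n) (CE n) (build xs) S \<and> card S = wt xs"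
    using card_S0 by blast
next
  fix k assume "\<exists>S. forcing_set (CV n) (CE n) (build xs) S \<and> card S = k"
  then show "wt xs \<le> k" using lower_bound[OF v n] by blast
qed

definition codes :: "nat \<Rightarrow> cf list set" where
  "codes n = {xs. length xs = n \<and> valid xs}"

lemma pm_set: assumes n: "1 \<le> n"
  shows "{M. perfect_matching (CV n) (CE n) M} = build ` codes n"
proof (intro equalityI subsetI)
  fix M assume "M \<in> {M. perfect_matching (CV n) (CE n) M}"
  then have pm: "perfect_matching (CV n) (CE n) M" by simp
  have "M = build (decs n M)" "decs n M \<in> codes n"
    using pm_is_build[OF pm n] unfolding codes_def by auto
  then show "M \<in> build ` codes n" by blast
next
  fix M assume "M \<in> build ` codes n"
  then obtain xs where "M = build xs" "valid xs" "length xs = n" unfolding codes_def by blast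
  then show "M \<in> {M. perfect_matching (CV n) (CE n) M}" using build_pm n by blast
qed

definition PP :: "nat \<Rightarrow> int poly" where
  "PP n = (\<Sum>xs\<in>codes n. monom 1 (wt xs))"

lemma fp_CV: assumes n: "1 \<le> n" shows "forcing_poly (CV n) (CE n) = PP n"
proof -
  have inj: "inj_on build (codes n)"
    using inj_build[of n] by (rule inj_on_subset) (auto simp: codes_def)
  have "forcing_poly (CV n) (CE n) = (\<Sum>M\<in>build ` codes n. monom 1 (forcing_number (CV n) (CE n) M))"
    unfolding forcing_poly_def pm_set[OF n] by (rule refl)
  also have "\<dots> = (\<Sum>xs\<in>codes n. monom 1 (forcing_number (CV n) (CE n) (build xs)))"
    by (simp only: sum.reindex[OF inj] comp_def)
  also have "\<dots> = PP n" unfolding PP_def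
  proof (rule sum.cong[OF refl])
    fix xs assume "xs \<in> codes n"
    then have "valid xs" "length xs = n" unfolding codes_def by auto
    then show "monom 1 (forcing_number (CV n) (CE n) (build xs)) = monom 1 (wt xs)"
      using fn_build[of xs n] n by simp
  qed
  finally show ?thesis .
qed

lemma F_pyrene_PP: assumes n: "1 \<le> n" shows "F_pyrene n = PP n"
  unfolding F_pyrene_def E_eq V_eq[OF n] fp_transfer[OF inj_pos] fp_CV[OF n] by (rule refl)

lemma F_pyrene_0: "F_pyrene 0 = 1"
proof -
  have c: "pyrene_centres 0 = {}" unfolding pyrene_centres_def by auto
  have V: "pyrene_V 0 = {}" unfolding pyrene_V_def c by simp
  have E: "pyrene_E 0 = {}" unfolding pyrene_E_def c by simp
  have pm: "{M. perfect_matching {} {} M} = {{}}" unfolding perfect_matching_def by auto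
  have fs: "forcing_set {} {} {} {}" unfolding forcing_set_def perfect_matching_def by auto
  have fn0: "forcing_number {} {} {} = 0" unfolding forcing_number_def
    by (rule Least_equality) (use fs in auto)
  show ?thesis unfolding F_pyrene_def V E forcing_poly_def pm by (simp add: fn0)
qed

definition ok :: "cf \<Rightarrow> cf list \<Rightarrow> bool" where
  "ok x xs \<longleftrightarrow> \<not> (x = B \<and> xs \<noteq> [] \<and> hd xs = A)"

lemma valid_Cons: "valid (x # xs) \<longleftrightarrow> valid xs \<and> ok x xs"
proof
  assume v: "valid (x # xs)"
  have "valid xs" unfolding valid_def
  proof (intro allI impI)
    fix k assume "Suc k < length xs"
    then show "\<not> (xs ! k = B \<and> xs ! Suc k = A)"
      using v unfolding valid_def by (metis Suc_less_eq length_Cons nth_Cons_Suc)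
  qed
  moreover have "ok x xs" unfolding ok_def
  proof
    assume a: "x = B \<and> xs \<noteq> [] \<and> hd xs = A"
    then have "Suc 0 < length (x # xs)" "(x # xs) ! 0 = B" "(x # xs) ! Suc 0 = A"
      by (auto simp: hd_conv_nth)
    then show False using v unfolding valid_def by blast
  qed
  ultimately show "valid xs \<and> ok x xs" by blast
next
  assume a: "valid xs \<and> ok x xs"
  show "valid (x # xs)" unfolding valid_def
  proof (intro allI impI)
    fix i assume i: "Suc i < length (x # xs)"
    show "\<not> ((x # xs) ! i = B \<and> (x # xs) ! Suc i = A)"
    proof (cases i)
      case 0
      then have "xs \<noteq> []" using i by auto
      then show ?thesis using a 0 unfolding ok_def by (auto simp: hd_conv_nth)
    next
      case (Suc k)
      then have "Suc k < length xs" using i by simp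
      then show ?thesis using a Suc unfolding valid_def by simp
    qed
  qed
qed

lemma wt_Cons: "wt (x # xs) = w x + wt xs"
  unfolding wt_def by (simp only: length_Cons sum.lessThan_Suc_shift nth_Cons_0 nth_Cons_Suc)

lemma wt_Nil: "wt [] = 0" unfolding wt_def by simp

definition CF :: "cf set" where "CF = {F False False, F False True, F True False, F True True, A, B}"

lemma in_CF: "x \<in> CF"
  unfolding CF_def by (cases x) auto

lemma finite_codes: "finite (codes n)"
proof -
  have "codes n \<subseteq> {xs. set xs \<subseteq> CF \<and> length xs = n}" unfolding codes_def using in_CF by blast
  moreover have "finite {xs. set xs \<subseteq> CF \<and> length xs = n}"
    by (rule finite_lists_length_eq) (simp add: CF_def)
  ultimately show ?thesis by (rule finite_subset)
qed

lemma codes_Suc: "codes (Suc n) = (\<lambda>p. fst p # snd p) ` Sigma CF (\<lambda>x. {xs \<in> codes n. ok x xs})"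
proof (intro equalityI subsetI)
  fix ys assume "ys \<in> codes (Suc n)"
  then obtain x xs where ys: "ys = x # xs" "length xs = n" "valid (x # xs)"
    unfolding codes_def by (cases ys) auto
  then have "(x, xs) \<in> Sigma CF (\<lambda>x. {xs \<in> codes n. ok x xs})"
    using in_CF valid_Cons unfolding codes_def by auto
  then show "ys \<in> (\<lambda>p. fst p # snd p) ` Sigma CF (\<lambda>x. {xs \<in> codes n. ok x xs})"
    using ys by force
next
  fix ys assume "ys \<in> (\<lambda>p. fst p # snd p) ` Sigma CF (\<lambda>x. {xs \<in> codes n. ok x xs})"
  then obtain x xs where "ys = x # xs" "xs \<in> codes n" "ok x xs" by auto
  then show "ys \<in> codes (Suc n)" unfolding codes_def using valid_Cons by auto
qed

definition CA :: "nat \<Rightarrow> cf list set" where "CA n = {xs \<in> codes n. xs \<noteq> [] \<and> hd xs = A}"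

definition QQ :: "nat \<Rightarrow> int poly" where "QQ n = (\<Sum>xs\<in>CA n. monom 1 (wt xs))"

lemma sum_codes_Suc:
  "(\<Sum>ys\<in>codes (Suc n). f ys) = (\<Sum>x\<in>CF. \<Sum>xs\<in>{xs \<in> codes n. ok x xs}. f (x # xs))"
proof -
  have inj: "inj_on (\<lambda>p. fst p # snd p) (Sigma CF (\<lambda>x. {xs \<in> codes n. ok x xs}))"
    by (rule inj_onI) auto
  have "(\<Sum>ys\<in>codes (Suc n). f ys) = (\<Sum>p\<in>Sigma CF (\<lambda>x. {xs \<in> codes n. ok x xs}). f (fst p # snd p))"
    unfolding codes_Suc by (simp only: sum.reindex[OF inj] comp_def)
  moreover have "(\<Sum>x\<in>CF. \<Sum>xs\<in>{xs \<in> codes n. ok x xs}. f (x # xs)) =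
     (\<Sum>(x, xs)\<in>Sigma CF (\<lambda>x. {xs \<in> codes n. ok x xs}). f (x # xs))"
    by (rule sum.Sigma) (auto simp: CF_def finite_codes)
  ultimately show ?thesis by (simp only: case_prod_unfold)
qed

lemma ok_notB: "x \<noteq> B \<Longrightarrow> {xs \<in> codes n. ok x xs} = codes n"
  unfolding ok_def by auto

lemma ok_B: "{xs \<in> codes n. ok B xs} = codes n - CA n"
  unfolding ok_def CA_def by auto

lemma PP_Suc:
  "PP (Suc n) = (4 * monom 1 2 + 2 * monom 1 1) * PP n - monom 1 1 * QQ n"
proof -
  have m: "monom (1::int) (w x + wt xs) = monom 1 (w x) * monom 1 (wt xs)" for x xs
    by (simp add: mult_monom)
  have s: "(\<Sum>xs\<in>{xs \<in> codes n. ok x xs}. monom (1::int) (wt (x # xs))) =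
        monom 1 (w x) * (\<Sum>xs\<in>{xs \<in> codes n. ok x xs}. monom 1 (wt xs))" for x
    by (simp add: wt_Cons sum_distrib_left mult_monom)
  have pb: "(\<Sum>xs\<in>{xs \<in> codes n. ok B xs}. monom 1 (wt xs)) = PP n - QQ n"
    unfolding ok_B PP_def QQ_def by (rule sum_diff) (auto simp: finite_codes CA_def)
  have pn: "(\<Sum>xs\<in>{xs \<in> codes n. ok x xs}. monom 1 (wt xs)) = PP n" if "x \<noteq> B" for x
    unfolding ok_notB[OF that] PP_def by (rule refl)
  have "PP (Suc n) = (\<Sum>x\<in>CF. monom 1 (w x) * (\<Sum>xs\<in>{xs \<in> codes n. ok x xs}. monom 1 (wt xs)))"
    unfolding PP_def sum_codes_Suc s by (rule refl)
  also have "\<dots> = 4 * (monom 1 2 * PP n) + monom 1 1 * PP n + monom 1 1 * (PP n - QQ n)"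
    unfolding CF_def by (simp add: pn pb)
  also have "\<dots> = (4 * monom 1 2 + 2 * monom 1 1) * PP n - monom 1 1 * QQ n"
    by (simp add: algebra_simps)
  finally show ?thesis .
qed

lemma CA_Suc: "CA (Suc n) = (\<lambda>xs. A # xs) ` codes n"
proof (intro equalityI subsetI)
  fix ys assume "ys \<in> CA (Suc n)"
  then obtain xs where "ys = A # xs" "valid (A # xs)" "length xs = n"
    unfolding CA_def codes_def by (cases ys) auto
  then show "ys \<in> (\<lambda>xs. A # xs) ` codes n" unfolding codes_def using valid_Cons by auto
next
  fix ys assume "ys \<in> (\<lambda>xs. A # xs) ` codes n"
  then obtain xs where "ys = A # xs" "xs \<in> codes n" by auto
  then show "ys \<in> CA (Suc n)" unfolding CA_def codes_def using valid_Cons by (auto simp: ok_def)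
qed

lemma QQ_Suc: "QQ (Suc n) = monom 1 1 * PP n"
proof -
  have "QQ (Suc n) = (\<Sum>xs\<in>codes n. monom 1 (wt (A # xs)))"
    unfolding QQ_def CA_Suc by (simp add: sum.reindex inj_on_def)
  also have "\<dots> = monom 1 1 * PP n"
    unfolding PP_def by (simp add: wt_Cons mult_monom sum_distrib_left)
  finally show ?thesis .
qed

lemma codes_0: "codes 0 = {[]}" unfolding codes_def valid_def by auto
lemma CA_0: "CA 0 = {}" unfolding CA_def codes_def by auto

lemma PP_0: "PP 0 = 1" unfolding PP_def codes_0 by (simp add: wt_Nil)
lemma QQ_0: "QQ 0 = 0" unfolding QQ_def CA_0 by simp

lemma c_eq: "[:0, 2, 4:] = (4 * monom 1 2 + 2 * monom 1 1 :: int poly)"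
  by (rule poly_eqI) (simp add: coeff_monom coeff_pCons numeral_poly split: nat.split)

lemma c2_eq: "[:0, 0, 1:] = (monom 1 1 * monom 1 1 :: int poly)"
  by (rule poly_eqI) (simp add: mult_monom coeff_monom coeff_pCons split: nat.split)

lemma F_PP: "F_pyrene n = PP n"
  by (cases n) (simp_all add: F_pyrene_0 PP_0 F_pyrene_PP)

theorem theorem3p1:
  shows "F_pyrene 0 = 1 \<and> F_pyrene 1 = [:0, 2, 4:] \<and>
         (\<forall>n\<ge>2. F_pyrene n = [:0, 2, 4:] * F_pyrene (n - 1) - [:0, 0, 1:] * F_pyrene (n - 2))"
proof (intro conjI allI impI)
  show "F_pyrene 0 = 1" by (rule F_pyrene_0)
  show "F_pyrene 1 = [:0, 2, 4:]"
    unfolding F_PP c_eq using PP_Suc[of 0] by (simp add: PP_0 QQ_0)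
  fix n :: nat assume "2 \<le> n"
  then obtain m where n: "n = Suc (Suc m)" by (metis add_2_eq_Suc le_Suc_ex)
  show "F_pyrene n = [:0, 2, 4:] * F_pyrene (n - 1) - [:0, 0, 1:] * F_pyrene (n - 2)"
    unfolding F_PP n c_eq c2_eq using PP_Suc[of "Suc m"] QQ_Suc[of m] by (simp add: algebra_simps)
qed

end
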